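(* Let $n_1,n_2,n_3\in\mathbb{N}$, let $\sigma$ be a segment label map on $G=\{1,\dots,n_1\}\times\{1,\dots,n_2\}\times\{1,\dots,n_3\}$, fix any decomposition of $T$ into blocks, and let $\tau'$ be the output of the block-wise method. For each block $B$ let $\mu_B$ denote the labeling of $B$ after Step 2 (i.e. $\lambda_B$ with offsets added, before label reconciliation). Then for each block $B$, any 1-cell $t_1\in B$ and any 2-cell $t_2\in\Gamma(t_1)$: $\mu_B(t_2)\neq\mu_B(s)$ for all $s\in\Gamma(t_1)\setminus\{t_2\}$ if and only if $\tau'(t_2)\neq\tau'(s)$ for all $s\in\Gamma(t_1)\setminus\{t_2\}$.
   Context: Voxel grid and segmentation: $G=\{1,\dots,n_1\}\times\{1,\dots,n_2\}\times\{1,\dots,n_3\}$; voxels $v,w$ are adjacent iff $\sum_i|v_i-w_i|=1$. A segment label map is $\sigma:G\to\mathbb{N}=\{1,2,\dots\}$ such that each level set $\sigma^{-1}(l)$ is connected w.r.t. this adjacency. Topological grid: $T=\{1,\dots,2n_1-1\}\times\{1,\dots,2n_2-1\}\times\{1,\dots,2n_3-1\}$; a cell with exactly $j$ odd coordinates is a $j$-cell. Voxel $r$ corresponds to the 3-cell $2r-1$. Two cells are 6-neighbors if they differ by $1$ in exactly one coordinate. For a $j$-cell $t$, $\Gamma(t)$ is the set of 6-neighbors of $t$ in $T$ that are $(j+1)$-cells. Cells $t_1,t_2$ are connected, $t_1\leftrightarrow t_2$, iff there is $t\in T$ with $t_1,t_2\in\Gamma(t)$. Procedure LABEL: for a voxel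 box $\prod_i\{a_i,\dots,b_i\}\subseteq G$ let $B=\prod_i\{2a_i-1,\dots,2b_i-1\}$ be its cell box (for non-3-cells $t\in B$, $\Gamma(t)\subseteq B$). $\mathrm{LABEL}(\sigma,B)$ produces $\lambda:B\to\mathbb{N}_0$: (1) $\lambda(2r-1)=\sigma(r)$ for 3-cells. (2) For $j=2,1,0$ in this order: for each $j$-cell $t\in B$ let $\theta(t)$ be the set of positive integers occurring exactly once in $(\lambda(s))_{s\in\Gamma(t)}$; $t$ is active iff $\theta(t)\ne\emptyset$, inactive $j$-cells get label $0$; the active $j$-cells of $B$ are partitioned into maximal sets of cells with equal $\theta$ that are connected by $\leftrightarrow$-paths inside the set; these classes are numbered $1,\dots,m_j(B)$ arbitrarily and each active $j$-cell gets its class number. Block-wise method: for each axis $i$ choose odd integers $1=a^i_0<\dots<a^i_{m_i}=2n_i-1$; blocks are the boxes $\prod_i\{a^i_{k_i-1},\dots,a^i_{k_i}\}$. Step 1: $\lambda_B=\mathrm{LABEL}(\sigma,B)$ for each block. Step 2: with blocks ordered $B_1,\dots,B_K$, add offset $\sum_{k'<k}m_j(B_{k'})$ to each positive $j$-cell label of $\lambda_{B_k}$ ($j\in\{0,1,2\}$). Step 3: for $j\in\{1,2\}$, via union–find, unite the labels received in different blocks by any active $j$-cell lying in several blocks, and replace every positive $j$-cell label by its set representative. Step 4: for each 0-cell $t_0$ and each pair of distinct 1-cell labels occurring exactly once among the current labels of $\Gamma(t_0)$, merge the two labels if the corresponding 1-cells bound the same set of current 2-cell labels; if any merge took place at $t_0$,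 recompute the activity of $t_0$ and set its label to $0$ if inactive. The result is $\tau':T\to\mathbb{N}_0$. *)

theory Defs
  imports Main
begin

type_synonym cell = "int \<times> int \<times> int"

definition l1dist :: "cell \<Rightarrow> cell \<Rightarrow> int" where
  "l1dist v w = (case v of (x,y,z) \<Rightarrow> case w of (x',y',z') \<Rightarrow>
      \<bar>x - x'\<bar> + \<bar>y - y'\<bar> + \<bar>z - z'\<bar>)"

definition vgrid :: "nat \<Rightarrow> nat \<Rightarrow> nat \<Rightarrow> cell set" where
  "vgrid n1 n2 n3 = {(x,y,z). 1 \<le> x \<and> x \<le> int n1 \<and> 1 \<le> y \<and> y \<le> int n2 \<and> 1 \<le> z \<and> z \<le> int n3}"

definition vadj :: "cell \<Rightarrow> cell \<Rightarrow> bool" where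
  "vadj v w \<longleftrightarrow> l1dist v w = 1"

definition seg_label_map :: "nat \<Rightarrow> nat \<Rightarrow> nat \<Rightarrow> (cell \<Rightarrow> nat) \<Rightarrow> bool" where
  "seg_label_map n1 n2 n3 \<sigma> \<longleftrightarrow>
     (\<forall>v\<in>vgrid n1 n2 n3. \<sigma> v \<ge> 1) \<and>
     (\<forall>l. \<forall>v\<in>vgrid n1 n2 n3. \<forall>w\<in>vgrid n1 n2 n3. \<sigma> v = l \<and> \<sigma> w = l \<longrightarrow>
        (v, w) \<in> {(a, b). a \<in> vgrid n1 n2 n3 \<and> b \<in> vgrid n1 n2 n3 \<and> \<sigma> a = l \<and> \<sigma> b = l \<and> vadj a b}\<^sup>*)"

definition tgrid :: "nat \<Rightarrow> nat \<Rightarrow> nat \<Rightarrow> cell set" where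
  "tgrid n1 n2 n3 = {(x,y,z). 1 \<le> x \<and> x \<le> 2 * int n1 - 1 \<and> 1 \<le> y \<and> y \<le> 2 * int n2 - 1
                        \<and> 1 \<le> z \<and> z \<le> 2 * int n3 - 1}"

definition cdim :: "cell \<Rightarrow> nat" where
  "cdim t = (case t of (x,y,z) \<Rightarrow>
      (if odd x then 1 else 0) + (if odd y then 1 else 0) + (if odd z then 1 else 0))"

definition nbr6 :: "cell \<Rightarrow> cell \<Rightarrow> bool" where
  "nbr6 t s \<longleftrightarrow> l1dist t s = 1"

definition Gam :: "cell set \<Rightarrow> cell \<Rightarrow> cell set" where
  "Gam T t = {s \<in> T. nbr6 t s \<and> cdim s = cdim t + 1}"

definition conn :: "cell set \<Rightarrow> cell \<Rightarrow> cell \<Rightarrow> bool" where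
  "conn T t1 t2 \<longleftrightarrow> (\<exists>t\<in>T. t1 \<in> Gam T t \<and> t2 \<in> Gam T t)"

text \<open>Voxel corresponding to a 3-cell: 2r-1 = t.\<close>
definition vox_of :: "cell \<Rightarrow> cell" where
  "vox_of t = (case t of (x,y,z) \<Rightarrow> ((x + 1) div 2, (y + 1) div 2, (z + 1) div 2))"

definition theta :: "cell set \<Rightarrow> (cell \<Rightarrow> nat) \<Rightarrow> cell \<Rightarrow> nat set" where
  "theta T lam t = {l. l > 0 \<and> card {s \<in> Gam T t. lam s = l} = 1}"

definition classrel :: "cell set \<Rightarrow> (cell \<Rightarrow> nat) \<Rightarrow> cell set \<Rightarrow> nat \<Rightarrow> (cell \<times> cell) set" where
  "classrel T lam B j = {(u, v). u \<in> B \<and> v \<in> B \<and> cdim u = j \<and> cdim v = j \<and>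
      theta T lam u \<noteq> {} \<and> theta T lam u = theta T lam v \<and> conn T u v}"

text \<open>lam (restricted to B) together with the class counts m j is a possible
  output of LABEL(sigma, B) (the numbering of classes being arbitrary).\<close>
definition is_LABEL :: "cell set \<Rightarrow> (cell \<Rightarrow> nat) \<Rightarrow> cell set \<Rightarrow> (cell \<Rightarrow> nat) \<Rightarrow> (nat \<Rightarrow> nat) \<Rightarrow> bool" where
  "is_LABEL T \<sigma> B lam m \<longleftrightarrow>
     (\<forall>t\<in>B. cdim t = 3 \<longrightarrow> lam t = \<sigma> (vox_of t)) \<and>
     (\<forall>j\<in>{0,1,2}.
        (\<forall>t\<in>B. cdim t = j \<and> theta T lam t = {} \<longrightarrow> lam t = 0) \<and>
        lam ` {t \<in> B. cdim t = j \<and> theta T lam t \<noteq> {}} = {1..m j} \<and>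
        (\<forall>t\<in>B. \<forall>t'\<in>B. cdim t = j \<and> cdim t' = j \<and> theta T lam t \<noteq> {} \<and> theta T lam t' \<noteq> {} \<longrightarrow>
            (lam t = lam t' \<longleftrightarrow> (t, t') \<in> (classrel T lam B j)\<^sup>*)))"

definition valid_cuts :: "nat \<Rightarrow> int list \<Rightarrow> bool" where
  "valid_cuts n a \<longleftrightarrow> a \<noteq> [] \<and> sorted_wrt (<) a \<and> hd a = 1 \<and> last a = 2 * int n - 1 \<and>
     (\<forall>x\<in>set a. odd x)"

definition axis_intervals :: "int list \<Rightarrow> int set list" where
  "axis_intervals a = map (\<lambda>k. {a ! (k - 1) .. a ! k}) [1..<length a]"

definition blocks :: "int list \<Rightarrow> int list \<Rightarrow> int list \<Rightarrow> cell set set" where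
  "blocks a1 a2 a3 = {I1 \<times> I2 \<times> I3 | I1 I2 I3.
      I1 \<in> set (axis_intervals a1) \<and> I2 \<in> set (axis_intervals a2) \<and> I3 \<in> set (axis_intervals a3)}"

definition offset :: "cell set list \<Rightarrow> (cell set \<Rightarrow> nat \<Rightarrow> nat) \<Rightarrow> nat \<Rightarrow> nat \<Rightarrow> nat" where
  "offset Bs m k j = (\<Sum>i<k. m (Bs ! i) j)"

definition mu :: "cell set list \<Rightarrow> (cell set \<Rightarrow> cell \<Rightarrow> nat) \<Rightarrow> (cell set \<Rightarrow> nat \<Rightarrow> nat)
                   \<Rightarrow> nat \<Rightarrow> cell \<Rightarrow> nat" where
  "mu Bs lam m k t =
     (if cdim t \<in> {0,1,2} \<and> lam (Bs ! k) t > 0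
      then lam (Bs ! k) t + offset Bs m k (cdim t) else lam (Bs ! k) t)"

definition unite_pairs :: "cell set list \<Rightarrow> (cell set \<Rightarrow> cell \<Rightarrow> nat) \<Rightarrow> (cell set \<Rightarrow> nat \<Rightarrow> nat)
                            \<Rightarrow> nat \<Rightarrow> (nat \<times> nat) set" where
  "unite_pairs Bs lam m j = {(mu Bs lam m k t, mu Bs lam m k' t) | k k' t.
      k < length Bs \<and> k' < length Bs \<and> k \<noteq> k' \<and> t \<in> Bs ! k \<and> t \<in> Bs ! k' \<and> cdim t = j \<and>
      mu Bs lam m k t > 0 \<and> mu Bs lam m k' t > 0}"

text \<open>rep j is a choice of set representatives of the union-find partition
  for j-cell labels.\<close>
definition is_rep :: "cell set list \<Rightarrow> (cell set \<Rightarrow> cell \<Rightarrow> nat) \<Rightarrow> (cell set \<Rightarrow> nat \<Rightarrow> nat)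
                       \<Rightarrow> nat \<Rightarrow> (nat \<Rightarrow> nat) \<Rightarrow> bool" where
  "is_rep Bs lam m j r \<longleftrightarrow>
     (\<forall>l. (l, r l) \<in> (unite_pairs Bs lam m j)\<^sup>*) \<and>
     (\<forall>l l'. (l, l') \<in> (unite_pairs Bs lam m j)\<^sup>* \<longrightarrow> r l = r l')"

end

theory Submission
  imports Defs
begin

lemma odd_in: "even (x::int) \<Longrightarrow> odd p \<Longrightarrow> odd q \<Longrightarrow> p \<le> x \<Longrightarrow> x \<le> q \<Longrightarrow> p \<le> x - 1 \<and> x + 1 \<le> q"
  by presburger
lemma three: "(a::int) + b + c = 1 \<Longrightarrow> 0 \<le> a \<Longrightarrow> 0 \<le> b \<Longrightarrow> 0 \<le> c \<Longrightarrow>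
   (a = 0 \<and> b = 0 \<and> c = 1) \<or> (a = 0 \<and> b = 1 \<and> c = 0) \<or> (a = 1 \<and> b = 0 \<and> c = 0)"
  by linarith
lemma abs1: "\<bar>(x::int) - x'\<bar> = 1 \<Longrightarrow> x' = x + 1 \<or> x' = x - 1" by linarith
lemma abs0: "\<bar>(x::int) - x'\<bar> = 0 \<Longrightarrow> x' = x" by linarith
lemma one_coord: "x' = x + 1 \<or> x' = x - 1 \<Longrightarrow> even (x::int) \<Longrightarrow> odd p \<Longrightarrow> odd q \<Longrightarrow> p \<le> x \<Longrightarrow> x \<le> q \<Longrightarrow> p \<le> x' \<and> x' \<le> q"
  using odd_in[of x p q] by linarith
lemma gam_sub:
  assumes o: "odd p1" "odd q1" "odd p2" "odd q2" "odd p3" "odd q3"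
    and t: "t \<in> {p1..q1}\<times>{p2..q2}\<times>{p3..q3}" and s: "s \<in> Gam T t"
  shows "s \<in> {p1..q1}\<times>{p2..q2}\<times>{p3..q3}"
proof -
  obtain x y z where tt: "t = (x,y,z)" by (cases t) auto
  obtain x' y' z' where ss: "s = (x',y',z')" by (cases s) auto
  have d: "\<bar>x - x'\<bar> + \<bar>y - y'\<bar> + \<bar>z - z'\<bar> = 1"
   and c: "(if odd x' then 1 else 0) + (if odd y' then 1 else 0) + (if odd z' then 1 else 0)
       = (if odd x then 1 else 0) + (if odd y then 1 else 0) + (if odd z then (1::nat) else 0) + 1"
    using s unfolding tt ss Gam_def nbr6_def l1dist_def cdim_def by auto
  have r: "p1 \<le> x" "x \<le> q1" "p2 \<le> y" "y \<le> q2" "p3 \<le> z" "z \<le> q3" using t tt by auto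
  from three[OF d abs_ge_zero abs_ge_zero abs_ge_zero] show ?thesis
  proof (elim disjE conjE)
    assume h: "\<bar>x - x'\<bar> = 0" "\<bar>y - y'\<bar> = 0" "\<bar>z - z'\<bar> = 1"
    have e: "x' = x" "y' = y" "z' = z + 1 \<or> z' = z - 1" using abs0 abs1 h by auto
    then have "even z" using c by (auto split: if_splits)
    then show ?thesis using one_coord[OF e(3) _ o(5,6)] r e unfolding ss by auto
  next
    assume h: "\<bar>x - x'\<bar> = 0" "\<bar>y - y'\<bar> = 1" "\<bar>z - z'\<bar> = 0"
    have e: "x' = x" "y' = y + 1 \<or> y' = y - 1" "z' = z" using abs0 abs1 h by auto
    then have "even y" using c by (auto split: if_splits)
    then show ?thesis using one_coord[OF e(2) _ o(3,4)] r e unfolding ss by auto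
  next
    assume h: "\<bar>x - x'\<bar> = 1" "\<bar>y - y'\<bar> = 0" "\<bar>z - z'\<bar> = 0"
    have e: "x' = x + 1 \<or> x' = x - 1" "y' = y" "z' = z" using abs0 abs1 h by auto
    then have "even x" using c by (auto split: if_splits)
    then show ?thesis using one_coord[OF e(1) _ o(1,2)] r e unfolding ss by auto
  qed
qed
lemma axis_iv:
  assumes v: "valid_cuts n a" and I: "I \<in> set (axis_intervals a)"
  shows "\<exists>p q. I = {p..q} \<and> odd p \<and> odd q \<and> 1 \<le> p \<and> q \<le> 2 * int n - 1"
proof -
  from I obtain k where k: "1 \<le> k" "k < length a" "I = {a ! (k - 1) .. a ! k}"
    unfolding axis_intervals_def by auto
  have ne: "a \<noteq> []" and so: "sorted_wrt (<) a" and h: "hd a = 1" and l: "last a = 2 * int n - 1"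
    and od: "\<forall>x\<in>set a. odd x" using v unfolding valid_cuts_def by auto
  have h0: "a ! 0 = 1" using h ne by (simp add: hd_conv_nth)
  have l0: "a ! (length a - 1) = 2 * int n - 1" using l ne by (simp add: last_conv_nth)
  have le: "a ! i \<le> a ! j" if "i \<le> j" "j < length a" for i j
  proof (cases "i = j")
    case False then show ?thesis using sorted_wrt_nth_less[OF so, of i j] that by simp
  qed simp
  have "1 \<le> a ! (k - 1)" using le[of 0 "k-1"] k h0 by simp
  moreover have "a ! k \<le> 2 * int n - 1" using le[of k "length a - 1"] k l0 by simp
  moreover have "odd (a ! (k - 1))" "odd (a ! k)" using od k by auto
  ultimately show ?thesis using k by blast
qed

lemma block_shape:
  assumes v: "valid_cuts n1 a1" "valid_cuts n2 a2" "valid_cuts n3 a3"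
    and B: "B \<in> blocks a1 a2 a3"
  shows "\<exists>p1 q1 p2 q2 p3 q3. B = {p1..q1}\<times>{p2..q2}\<times>{p3..q3} \<and> odd p1 \<and> odd q1 \<and> odd p2 \<and> odd q2
     \<and> odd p3 \<and> odd q3 \<and> B \<subseteq> tgrid n1 n2 n3"
proof -
  from B obtain I1 I2 I3 where I: "B = I1 \<times> I2 \<times> I3" "I1 \<in> set (axis_intervals a1)"
    "I2 \<in> set (axis_intervals a2)" "I3 \<in> set (axis_intervals a3)" unfolding blocks_def by blast
  obtain p1 q1 where 1: "I1 = {p1..q1}" "odd p1" "odd q1" "1 \<le> p1" "q1 \<le> 2 * int n1 - 1"
    using axis_iv[OF v(1) I(2)] by blast
  obtain p2 q2 where 2: "I2 = {p2..q2}" "odd p2" "odd q2" "1 \<le> p2" "q2 \<le> 2 * int n2 - 1"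
    using axis_iv[OF v(2) I(3)] by blast
  obtain p3 q3 where 3: "I3 = {p3..q3}" "odd p3" "odd q3" "1 \<le> p3" "q3 \<le> 2 * int n3 - 1"
    using axis_iv[OF v(3) I(4)] by blast
  have "B \<subseteq> tgrid n1 n2 n3" using 1 2 3 I unfolding tgrid_def by auto
  then show ?thesis using 1 2 3 I by blast
qed

lemma classrel_theta: "(u, v) \<in> (classrel T lam B j)\<^sup>* \<Longrightarrow> theta T lam u = theta T lam v"
  by (induct rule: rtrancl_induct) (auto simp: classrel_def)
theorem proposition3:
  fixes n1 n2 n3 :: nat
    and \<sigma> :: "cell \<Rightarrow> nat"
    and a1 a2 a3 :: "int list"
    and Bs :: "cell set list"
    and lam :: "cell set \<Rightarrow> cell \<Rightarrow> nat"
    and m :: "cell set \<Rightarrow> nat \<Rightarrow> nat"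
    and rep :: "nat \<Rightarrow> nat \<Rightarrow> nat"
    and \<tau>' :: "cell \<Rightarrow> nat"
  assumes n_pos: "n1 \<ge> 1" "n2 \<ge> 1" "n3 \<ge> 1"
    and seg: "seg_label_map n1 n2 n3 \<sigma>"
    and cuts: "valid_cuts n1 a1" "valid_cuts n2 a2" "valid_cuts n3 a3"
    and order: "distinct Bs" "set Bs = blocks a1 a2 a3"
    and step1: "\<forall>B\<in>set Bs. is_LABEL (tgrid n1 n2 n3) \<sigma> B (lam B) (m B)"
    and step3: "\<forall>j\<in>{1,2}. is_rep Bs lam m j (rep j)"
    and out: "\<forall>k<length Bs. \<forall>t\<in>Bs ! k. cdim t = 2 \<longrightarrow> \<tau>' t = rep 2 (mu Bs lam m k t)"
  shows "\<forall>k<length Bs. \<forall>t1\<in>Bs ! k. cdim t1 = 1 \<longrightarrow>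
           (\<forall>t2\<in>Gam (tgrid n1 n2 n3) t1.
              (\<forall>s\<in>Gam (tgrid n1 n2 n3) t1 - {t2}. mu Bs lam m k t2 \<noteq> mu Bs lam m k s)
              \<longleftrightarrow> (\<forall>s\<in>Gam (tgrid n1 n2 n3) t1 - {t2}. \<tau>' t2 \<noteq> \<tau>' s))"
proof -
  define T where "T = tgrid n1 n2 n3"
  define th where "th t = theta T (\<lambda>s. \<sigma> (vox_of s)) t" for t
  define M where "M k t = mu Bs lam m k t" for k t
  define U where "U = unite_pairs Bs lam m 2"
  have shp: "\<exists>p1 q1 p2 q2 p3 q3. Bs ! k = {p1..q1}\<times>{p2..q2}\<times>{p3..q3} \<and> odd p1 \<and> odd q1 \<and> odd p2 \<and> odd q2
     \<and> odd p3 \<and> odd q3 \<and> Bs ! k \<subseteq> T" if "k < length Bs" for k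
    using block_shape[OF cuts, of "Bs ! k"] that order(2) nth_mem[OF that] unfolding T_def by auto
  have BT: "Bs ! k \<subseteq> T" if "k < length Bs" for k using shp[OF that] by blast
  have GB: "Gam T t \<subseteq> Bs ! k" if "k < length Bs" "t \<in> Bs ! k" for k t
  proof
    fix s assume "s \<in> Gam T t"
    with shp[OF that(1)] that(2) show "s \<in> Bs ! k" using gam_sub by metis
  qed
  have Gdim: "cdim s = cdim t + 1" if "s \<in> Gam T t" for s t using that unfolding Gam_def by auto
  have LB: "is_LABEL T \<sigma> (Bs ! k) (lam (Bs ! k)) (m (Bs ! k))" if "k < length Bs" for k
    using step1 nth_mem[OF that] unfolding T_def by blast
  have L2: "(\<forall>t\<in>Bs!k. cdim t = 2 \<and> theta T (lam (Bs!k)) t = {} \<longrightarrow> lam (Bs!k) t = 0) \<and>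
        lam (Bs!k) ` {t \<in> Bs!k. cdim t = 2 \<and> theta T (lam (Bs!k)) t \<noteq> {}} = {1..m (Bs!k) 2} \<and>
        (\<forall>t\<in>Bs!k. \<forall>t'\<in>Bs!k. cdim t = 2 \<and> cdim t' = 2 \<and> theta T (lam (Bs!k)) t \<noteq> {} \<and> theta T (lam (Bs!k)) t' \<noteq> {} \<longrightarrow>
            (lam (Bs!k) t = lam (Bs!k) t' \<longleftrightarrow> (t, t') \<in> (classrel T (lam (Bs!k)) (Bs!k) 2)\<^sup>*))"
    if "k < length Bs" for k
  proof -
    have "2 \<in> {0,1,2::nat}" by simp
    then show ?thesis using LB[OF that] unfolding is_LABEL_def by blast
  qed
  have thB: "theta T (lam (Bs!k)) t = th t" if "k < length Bs" "t \<in> Bs!k" "cdim t = 2" for k t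
  proof -
    have "lam (Bs!k) s = \<sigma> (vox_of s)" if "s \<in> Gam T t" for s
      using LB[OF \<open>k < length Bs\<close>] GB[OF \<open>k < length Bs\<close> \<open>t \<in> Bs!k\<close>] Gdim[OF that] that \<open>cdim t = 2\<close>
      unfolding is_LABEL_def by auto
    then have "\<And>l. {s \<in> Gam T t. lam (Bs!k) s = l} = {s \<in> Gam T t. \<sigma> (vox_of s) = l}" by auto
    then show ?thesis unfolding theta_def th_def by simp
  qed
  have pos: "(0 < lam (Bs!k) t \<longleftrightarrow> th t \<noteq> {}) \<and> (th t \<noteq> {} \<longrightarrow> lam (Bs!k) t \<in> {1..m (Bs!k) 2})"
    if "k < length Bs" "t \<in> Bs!k" "cdim t = 2" for k t
  proof -
    note L = L2[OF that(1)]
    have e: "theta T (lam (Bs!k)) t = th t" using thB[OF that] .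
    have "th t \<noteq> {} \<longrightarrow> lam (Bs!k) t \<in> {1..m (Bs!k) 2}"
    proof
      assume "th t \<noteq> {}"
      then have "t \<in> {t \<in> Bs!k. cdim t = 2 \<and> theta T (lam (Bs!k)) t \<noteq> {}}" using e that by simp
      then have "lam (Bs!k) t \<in> lam (Bs!k) ` {t \<in> Bs!k. cdim t = 2 \<and> theta T (lam (Bs!k)) t \<noteq> {}}" by (rule imageI)
      then show "lam (Bs!k) t \<in> {1..m (Bs!k) 2}" using L by simp
    qed
    moreover have "th t = {} \<longrightarrow> lam (Bs!k) t = 0"
    proof
      assume "th t = {}"
      then show "lam (Bs!k) t = 0" using conjunct1[OF L] that e by simp
    qed
    ultimately show ?thesis by auto
  qed
  have Mdef: "M k t = (if 0 < lam (Bs!k) t then lam (Bs!k) t + offset Bs m k 2 else lam (Bs!k) t)"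
    if "cdim t = 2" for k t using that unfolding M_def mu_def by simp
  have offS: "offset Bs m (Suc k) 2 = offset Bs m k 2 + m (Bs ! k) 2" for k
    unfolding offset_def by simp
  have offmono: "offset Bs m (Suc k) 2 \<le> offset Bs m k' 2" if "k < k'" for k k'
    unfolding offset_def using that by (intro sum_mono2) auto
  have range: "offset Bs m k 2 < M k t \<and> M k t \<le> offset Bs m (Suc k) 2"
    if "k < length Bs" "t \<in> Bs!k" "cdim t = 2" "0 < M k t" for k t
  proof -
    have "0 < lam (Bs!k) t" using that Mdef[OF that(3), of k] by (auto split: if_splits)
    then have "lam (Bs!k) t \<in> {1..m (Bs!k) 2}" using pos[OF that(1-3)] by blast
    then show ?thesis using Mdef[OF that(3), of k] \<open>0 < lam (Bs!k) t\<close> offS[of k] by auto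
  qed
  have samek: "k = k'" if "k < length Bs" "k' < length Bs" "t \<in> Bs!k" "t' \<in> Bs!k'" "cdim t = 2" "cdim t' = 2"
    "M k t = M k' t'" "0 < M k t" for k k' t t'
  proof (rule ccontr)
    assume "k \<noteq> k'"
    have r1: "offset Bs m k 2 < M k t \<and> M k t \<le> offset Bs m (Suc k) 2" using range that by blast
    have r2: "offset Bs m k' 2 < M k' t' \<and> M k' t' \<le> offset Bs m (Suc k') 2" using range that by auto
    show False
    proof (cases "k < k'")
      case True then show ?thesis using offmono[OF True] r1 r2 that(7) by linarith
    next
      case False then have kk: "k' < k" using \<open>k \<noteq> k'\<close> by simp
      show ?thesis using offmono[OF kk] r1 r2 that(7) by linarith
    qed
  qed
  have uniq: "th t = th t'" if "k < length Bs" "k' < length Bs" "t \<in> Bs!k" "t' \<in> Bs!k'" "cdim t = 2" "cdim t' = 2"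
    "M k t = M k' t'" "0 < M k t" for k k' t t'
  proof -
    have kk: "k = k'" using samek[OF that] .
    have p1: "0 < lam (Bs!k) t" using that Mdef[OF that(5), of k] by (auto split: if_splits)
    have p2: "0 < lam (Bs!k) t'" using that kk Mdef[OF that(6), of k] by (auto split: if_splits)
    have eq: "lam (Bs!k) t = lam (Bs!k) t'" using that kk Mdef[OF that(5), of k] Mdef[OF that(6), of k] p1 p2 by simp
    have a1: "th t \<noteq> {}" using pos[OF that(1,3,5)] p1 by blast
    have a2: "th t' \<noteq> {}" using pos[of k t'] that kk p2 by blast
    have "(t, t') \<in> (classrel T (lam (Bs!k)) (Bs!k) 2)\<^sup>*"
      using L2[OF that(1)] that kk eq a1 a2 thB[of k t] thB[of k t'] by auto
    then have "theta T (lam (Bs!k)) t = theta T (lam (Bs!k)) t'" by (rule classrel_theta)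
    then show ?thesis using thB[of k t] thB[of k t'] that kk by simp
  qed
  define has where "has L X \<longleftrightarrow> (\<exists>k t. k < length Bs \<and> t \<in> Bs!k \<and> cdim t = 2 \<and> M k t = L \<and> th t = X)" for L X
  have hasu: "X = Y" if "has L X" "has L Y" "0 < L" for L X Y
    using that uniq unfolding has_def by metis
  have U2: "0 < L \<and> 0 < L' \<and> (\<exists>X. has L X \<and> has L' X)" if "(L, L') \<in> U" for L L'
    using that unfolding U_def unite_pairs_def has_def M_def by blast
  have hasU: "has L' X \<and> 0 < L'" if "(L, L') \<in> U\<^sup>*" "has L X" "0 < L" for L L' X
    using that(1)
  proof (induct rule: rtrancl_induct)
    case base then show ?case using that by simp
  next
    case (step y z)
    then obtain Y where "has y Y" "has z Y" "0 < z" using U2 by blast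
    with step hasu show ?case by metis
  qed
  have zero: "R = 0" if "(0, R) \<in> U\<^sup>*" for R
    using that by (induct rule: rtrancl_induct) (auto dest: U2)
  have posR: "0 < R" if "(L, R) \<in> U\<^sup>*" "0 < L" for L R
    using that by (induct rule: rtrancl_induct) (auto dest: U2)
  have rep2: "(L, rep 2 L) \<in> U\<^sup>*" for L using step3 unfolding is_rep_def U_def by auto
  show ?thesis unfolding T_def[symmetric] M_def[symmetric]
  proof (intro allI impI ballI)
    fix k t1 t2 assume k: "k < length Bs" and t1: "t1 \<in> Bs!k" "cdim t1 = 1" and t2: "t2 \<in> Gam T t1"
    have inB: "s \<in> Bs!k \<and> cdim s = 2" if "s \<in> Gam T t1" for s
      using GB[OF k t1(1)] Gdim[OF that] that t1(2) by auto
    have tau: "\<tau>' s = rep 2 (M k s)" if "s \<in> Gam T t1" for s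
      using out k inB[OF that] unfolding M_def by auto
    show "(\<forall>s\<in>Gam T t1 - {t2}. M k t2 \<noteq> M k s) \<longleftrightarrow> (\<forall>s\<in>Gam T t1 - {t2}. \<tau>' t2 \<noteq> \<tau>' s)"
    proof
      assume H: "\<forall>s\<in>Gam T t1 - {t2}. \<tau>' t2 \<noteq> \<tau>' s"
      show "\<forall>s\<in>Gam T t1 - {t2}. M k t2 \<noteq> M k s"
        using H tau t2 by auto
    next
      assume H: "\<forall>s\<in>Gam T t1 - {t2}. M k t2 \<noteq> M k s"
      show "\<forall>s\<in>Gam T t1 - {t2}. \<tau>' t2 \<noteq> \<tau>' s"
      proof
        fix s assume s: "s \<in> Gam T t1 - {t2}"
        have ne: "M k t2 \<noteq> M k s" using H s by blast
        have sG: "s \<in> Gam T t1" using s by blast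
        have "rep 2 (M k t2) \<noteq> rep 2 (M k s)"
        proof (cases "M k t2 = 0")
          case True
          then have "rep 2 (M k t2) = 0" using zero rep2 by metis
          moreover have "0 < rep 2 (M k s)" using posR rep2 ne True by auto
          ultimately show ?thesis by simp
        next
          case F2: False
          show ?thesis
          proof (cases "M k s = 0")
            case True
            then have "rep 2 (M k s) = 0" using zero rep2 by metis
            moreover have "0 < rep 2 (M k t2)" using posR rep2 F2 by auto
            ultimately show ?thesis by simp
          next
            case F3: False
            show ?thesis
            proof
              assume eqR: "rep 2 (M k t2) = rep 2 (M k s)"
              have h1: "has (M k t2) (th t2)" using k inB[OF t2] unfolding has_def by blast
              have h2: "has (M k s) (th s)" using k inB[OF sG] unfolding has_def by blast
              have r1: "has (rep 2 (M k t2)) (th t2)" "0 < rep 2 (M k t2)"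
                using hasU[OF rep2 h1] F2 by auto
              have r2: "has (rep 2 (M k t2)) (th s)"
                using hasU[OF rep2 h2] F3 eqR by auto
              have theq: "th t2 = th s" using hasu[OF r1(1) r2 r1(2)] .
              have p1: "0 < lam (Bs!k) t2" using F2 Mdef[of t2 k] inB[OF t2] by (auto split: if_splits)
              have p2: "0 < lam (Bs!k) s" using F3 Mdef[of s k] inB[OF sG] by (auto split: if_splits)
              have a1: "th t2 \<noteq> {}" using pos[of k t2] k inB[OF t2] p1 by blast
              have th1: "theta T (lam (Bs!k)) t2 = th t2" using thB k inB[OF t2] by blast
              have th2: "theta T (lam (Bs!k)) s = th s" using thB k inB[OF sG] by blast
              have t1T: "t1 \<in> T" using BT[OF k] t1 by blast
              have "(t2, s) \<in> classrel T (lam (Bs!k)) (Bs!k) 2"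
                unfolding classrel_def conn_def using inB[OF t2] inB[OF sG] th1 th2 theq a1 t1T t2 sG by auto
              then have "lam (Bs!k) t2 = lam (Bs!k) s"
                using L2[OF k] inB[OF t2] inB[OF sG] th1 th2 theq a1 by auto
              then have "M k t2 = M k s" using Mdef[of t2 k] Mdef[of s k] inB[OF t2] inB[OF sG] by simp
              then show False using ne by simp
            qed
          qed
        qed
        then show "\<tau>' t2 \<noteq> \<tau>' s" using tau t2 sG by simp
      qed
    qed
  qed
qed
end
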